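(* Let $1<p\le2$ and assume $\sup_{\xi\in\mathcal{I}}\|u_\xi\|_{L^\infty(\overline{M})}/\|v_\xi\|_{L^\infty(\overline{M})}<\infty$. Let $\varphi$ be a positive function on $\mathcal{I}$ with $$M_\varphi:=\sup_{t>0}\,t\sum_{\xi:\ t\le\varphi(\xi)}\|v_\xi\|^2_{L^\infty(\overline{M})}<\infty.$$ Then for every $f\in L^p(\overline{M})$, $$\Big(\sum_{\xi\in\mathcal{I}}|\mathcal{F}_{L^*}f(\xi)|^p\,\|v_\xi\|_{L^\infty(\overline{M})}^{2-p}\,\varphi(\xi)^{2-p}\Big)^{1/p}\lesssim M_\varphi^{\frac{2-p}{p}}\|f\|_{L^p(\overline{M})}.$$
   Context: Standing setup: $\overline{M}$ is a smooth orientable manifold with (possibly empty) boundary and smooth density $dx$. $L$ is a pseudo-differential operator on its interior with boundary conditions giving discrete spectrum $\{\lambda_\xi\}_{\xi\in\mathcal{I}}$, eigenfunctions $u_\xi$ of $L$ and $v_\xi$ of $L^*$ ($L^*v_\xi=\overline{\lambda_\xi}v_\xi$), $\|u_\xi\|_{L^2}=\|v_\xi\|_{L^2}=1$, $(u_\xi,v_\eta)_{L^2}=\delta_{\xi\eta}$, $\{u_\xi\}$ a Riesz basis of $L^2(\overline{M})$, $u_\xi,v_\xi\in L^\infty$. $\mathcal{F}_{L^*}f(\xi):=\int_{\overline{M}}f(x)\overline{u_\xi(x)}\,dx$. *)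

theory Defs
  imports "HOL-Analysis.Analysis" "HOL-Probability.Essential_Supremum"
begin

definition in_Lp :: "'a measure \<Rightarrow> real \<Rightarrow> ('a \<Rightarrow> complex) \<Rightarrow> bool" where
  "in_Lp M p f \<longleftrightarrow> f \<in> borel_measurable M \<and> integrable M (\<lambda>x. cmod (f x) powr p)"

definition Lp_norm :: "'a measure \<Rightarrow> real \<Rightarrow> ('a \<Rightarrow> complex) \<Rightarrow> real" where
  "Lp_norm M p f = (\<integral>x. cmod (f x) powr p \<partial>M) powr (1 / p)"

definition in_Linf :: "'a measure \<Rightarrow> ('a \<Rightarrow> complex) \<Rightarrow> bool" where
  "in_Linf M f \<longleftrightarrow> f \<in> borel_measurable M \<and> esssup M (\<lambda>x. ereal (cmod (f x))) < \<infinity>"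

definition Linf_norm :: "'a measure \<Rightarrow> ('a \<Rightarrow> complex) \<Rightarrow> real" where
  "Linf_norm M f = real_of_ereal (esssup M (\<lambda>x. ereal (cmod (f x))))"

definition L2_inner :: "'a measure \<Rightarrow> ('a \<Rightarrow> complex) \<Rightarrow> ('a \<Rightarrow> complex) \<Rightarrow> complex" where
  "L2_inner M f g = (\<integral>x. f x * cnj (g x) \<partial>M)"

definition riesz_basis_L2 :: "'a measure \<Rightarrow> 'i set \<Rightarrow> ('i \<Rightarrow> 'a \<Rightarrow> complex) \<Rightarrow> bool" where
  "riesz_basis_L2 M I u \<longleftrightarrow>
     (\<forall>\<xi>\<in>I. in_Lp M 2 (u \<xi>)) \<and>
     (\<exists>A B. 0 < A \<and> 0 < B \<and>
        (\<forall>J c. finite J \<longrightarrow> J \<subseteq> I \<longrightarrow>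
           A * (\<Sum>\<xi>\<in>J. (cmod (c \<xi>))\<^sup>2) \<le> (Lp_norm M 2 (\<lambda>x. \<Sum>\<xi>\<in>J. c \<xi> * u \<xi> x))\<^sup>2 \<and>
           (Lp_norm M 2 (\<lambda>x. \<Sum>\<xi>\<in>J. c \<xi> * u \<xi> x))\<^sup>2 \<le> B * (\<Sum>\<xi>\<in>J. (cmod (c \<xi>))\<^sup>2))) \<and>
     (\<forall>f. in_Lp M 2 f \<longrightarrow> (\<forall>e>0. \<exists>J c. finite J \<and> J \<subseteq> I \<and>
           Lp_norm M 2 (\<lambda>x. f x - (\<Sum>\<xi>\<in>J. c \<xi> * u \<xi> x)) < e))"

definition FT_Lstar :: "'a measure \<Rightarrow> ('i \<Rightarrow> 'a \<Rightarrow> complex) \<Rightarrow> ('a \<Rightarrow> complex) \<Rightarrow> 'i \<Rightarrow> complex" where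
  "FT_Lstar M u f \<xi> = (\<integral>x. f x * cnj (u \<xi> x) \<partial>M)"

definition M_phi :: "'a measure \<Rightarrow> 'i set \<Rightarrow> ('i \<Rightarrow> 'a \<Rightarrow> complex) \<Rightarrow> ('i \<Rightarrow> real) \<Rightarrow> ennreal" where
  "M_phi M I v \<phi> = (SUP t\<in>{0<..}. ennreal t *
      (\<Sum>\<^sub>\<infinity>\<xi>\<in>{\<xi>\<in>I. t \<le> \<phi> \<xi>}. ennreal ((Linf_norm M (v \<xi>))\<^sup>2)))"

end

theory Submission
  imports Defs
begin

lemma powr_int_0:
  fixes e h :: real
  assumes e: "e > -1" and h: "h \<ge> 0"
  shows "(\<integral>\<^sup>+y. ennreal (y powr e) * indicator {0..h} y \<partial>lborel) = ennreal (h powr (e+1) / (e+1))"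
proof -
  have "(\<integral>\<^sup>+y. ennreal (indicator {0..h} y * y powr e) \<partial>lborel) = ennreal (h powr (e+1) / (e+1))"
    by (rule nn_integral_has_integral_lebesgue[OF _ has_integral_powr_from_0[OF e h]]) auto
  moreover have "\<And>y. ennreal (y powr e) * indicator {0..h} y = ennreal (indicator {0..h} y * y powr e)"
    by (simp split: split_indicator)
  ultimately show ?thesis by simp
qed

lemma powr_int_inf:
  fixes e a :: real
  assumes e: "e < -1" and a: "a > 0"
  shows "(\<integral>\<^sup>+y. ennreal (y powr e) * indicator {a..} y \<partial>lborel) = ennreal (-(a powr (e+1)) / (e+1))"
proof -
  have "(\<integral>\<^sup>+y. ennreal (indicator {a..} y * y powr e) \<partial>lborel) = ennreal (-(a powr (e+1)) / (e+1))"
    by (rule nn_integral_has_integral_lebesgue[OF _ has_integral_powr_to_inf[OF e a]]) auto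
  moreover have "\<And>y. ennreal (y powr e) * indicator {a..} y = ennreal (indicator {a..} y * y powr e)"
    by (simp split: split_indicator)
  ultimately show ?thesis by simp
qed

lemma powr_int_0':
  fixes e h :: real
  assumes e: "e > -1" and h: "h \<ge> 0"
  shows "(\<integral>\<^sup>+y. ennreal (y powr e) * indicator {0<..<h} y \<partial>lborel) = ennreal (h powr (e+1) / (e+1))"
proof -
  have "(\<integral>\<^sup>+y. ennreal (y powr e) * indicator {0<..<h} y \<partial>lborel) =
        (\<integral>\<^sup>+y. ennreal (y powr e) * indicator {0..h} y \<partial>lborel)"
  proof (rule nn_integral_cong_AE)
    have "AE y in lborel. y \<noteq> 0" "AE y in lborel. y \<noteq> h" by (auto simp: AE_lborel_singleton)
    then show "AE y in lborel. ennreal (y powr e) * indicator {0<..<h} y = ennreal (y powr e) * indicator {0..h} y"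
      by eventually_elim (auto simp: indicator_def)
  qed
  then show ?thesis using powr_int_0[OF e h] by simp
qed

lemma weak_layer:
  fixes w \<phi> :: "'i \<Rightarrow> real"
  assumes J: "finite J" and w: "\<forall>\<xi>\<in>J. 0 \<le> w \<xi>" and ph: "\<forall>\<xi>\<in>J. 0 < \<phi> \<xi>" and T: "0 \<le> T"
    and lim: "\<forall>t>0. (\<Sum>\<xi>\<in>{\<xi>\<in>J. t \<le> \<phi> \<xi>}. w \<xi>) \<le> Mr / t"
  shows "(\<Sum>\<xi>\<in>{\<xi>\<in>J. \<phi> \<xi> < T}. w \<xi> * (\<phi> \<xi>)\<^sup>2) \<le> 2 * Mr * T"
proof -
  define J' where "J' = {\<xi>\<in>J. \<phi> \<xi> < T}"
  have J': "finite J'" "J' \<subseteq> J" using J by (auto simp: J'_def)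
  have Mr: "0 \<le> Mr"
  proof -
    have "0 \<le> (\<Sum>\<xi>\<in>{\<xi>\<in>J. 1 \<le> \<phi> \<xi>}. w \<xi>)" using w by (intro sum_nonneg) auto
    also have "\<dots> \<le> Mr / 1" using lim[rule_format, of 1] by simp
    finally show ?thesis by simp
  qed
  have sq: "ennreal ((\<phi> \<xi>)\<^sup>2) = 2 * (\<integral>\<^sup>+y. ennreal (y powr 1) * indicator {0..\<phi> \<xi>} y \<partial>lborel)"
    if "\<xi> \<in> J" for \<xi>
  proof -
    have "0 \<le> \<phi> \<xi>" using ph that by auto
    then have "(\<integral>\<^sup>+y. ennreal (y powr 1) * indicator {0..\<phi> \<xi>} y \<partial>lborel) = ennreal ((\<phi> \<xi>)\<^sup>2 / 2)"
      using powr_int_0[of 1 "\<phi> \<xi>"] by (simp add: powr_numeral)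
    moreover have "ennreal ((\<phi> \<xi>)\<^sup>2) = ennreal 2 * ennreal ((\<phi> \<xi>)\<^sup>2 / 2)"
      by (subst ennreal_mult[symmetric]) auto
    ultimately show ?thesis by simp
  qed
  have "ennreal (\<Sum>\<xi>\<in>J'. w \<xi> * (\<phi> \<xi>)\<^sup>2) = (\<Sum>\<xi>\<in>J'. ennreal (w \<xi>) * ennreal ((\<phi> \<xi>)\<^sup>2))"
    using w J' by (subst sum_ennreal[symmetric]) (auto intro!: sum.cong simp: ennreal_mult)
  also have "\<dots> = (\<Sum>\<xi>\<in>J'. \<integral>\<^sup>+y. ennreal (2 * w \<xi>) * (ennreal (y powr 1) * indicator {0..\<phi> \<xi>} y) \<partial>lborel)"
  proof (intro sum.cong refl)
    fix \<xi> assume x: "\<xi> \<in> J'"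
    then have w0: "0 \<le> w \<xi>" using J' w by auto
    have "ennreal (w \<xi>) * ennreal ((\<phi> \<xi>)\<^sup>2) = ennreal (w \<xi>) * 2 * (\<integral>\<^sup>+y. ennreal (y powr 1) * indicator {0..\<phi> \<xi>} y \<partial>lborel)"
      using sq[of \<xi>] x J' by (simp add: mult.assoc subset_iff)
    also have "\<dots> = ennreal (2 * w \<xi>) * (\<integral>\<^sup>+y. ennreal (y powr 1) * indicator {0..\<phi> \<xi>} y \<partial>lborel)"
      using w0 by (simp add: ennreal_mult mult.commute)
    also have "\<dots> = (\<integral>\<^sup>+y. ennreal (2 * w \<xi>) * (ennreal (y powr 1) * indicator {0..\<phi> \<xi>} y) \<partial>lborel)"
      by (rule nn_integral_cmult[symmetric]) auto
    finally show "ennreal (w \<xi>) * ennreal ((\<phi> \<xi>)\<^sup>2) = (\<integral>\<^sup>+y. ennreal (2 * w \<xi>) * (ennreal (y powr 1) * indicator {0..\<phi> \<xi>} y) \<partial>lborel)" .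
  qed
  also have "\<dots> = (\<integral>\<^sup>+y. (\<Sum>\<xi>\<in>J'. ennreal (2 * w \<xi>) * (ennreal (y powr 1) * indicator {0..\<phi> \<xi>} y)) \<partial>lborel)"
    by (rule nn_integral_sum[symmetric]) auto
  also have "\<dots> \<le> (\<integral>\<^sup>+y. ennreal (2 * Mr) * indicator {0..T} y \<partial>lborel)"
  proof (rule nn_integral_mono)
    fix y :: real
    have "(\<Sum>\<xi>\<in>J'. ennreal (2 * w \<xi>) * (ennreal (y powr 1) * indicator {0..\<phi> \<xi>} y))
        = ennreal (\<Sum>\<xi>\<in>J'. 2 * w \<xi> * (y powr 1 * indicator {0..\<phi> \<xi>} y))"
      using w J' by (subst sum_ennreal[symmetric]) (auto intro!: sum.cong simp: ennreal_mult split: split_indicator)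
    also have "\<dots> \<le> ennreal (2 * Mr * indicator {0..T} y)"
    proof (rule ennreal_leI)
      show "(\<Sum>\<xi>\<in>J'. 2 * w \<xi> * (y powr 1 * indicator {0..\<phi> \<xi>} y)) \<le> 2 * Mr * indicator {0..T} y"
      proof (cases "0 < y \<and> y \<le> T")
        case True
        have "(\<Sum>\<xi>\<in>J'. 2 * w \<xi> * (y powr 1 * indicator {0..\<phi> \<xi>} y))
              = (\<Sum>\<xi>\<in>{\<xi>\<in>J'. y \<le> \<phi> \<xi>}. 2 * y * w \<xi>)"
          using True by (subst sum.inter_filter[OF J'(1)]) (auto intro!: sum.cong simp: indicator_def)
        also have "\<dots> \<le> (\<Sum>\<xi>\<in>{\<xi>\<in>J. y \<le> \<phi> \<xi>}. 2 * y * w \<xi>)"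
          using True J J' w by (intro sum_mono2) auto
        also have "\<dots> = 2 * y * (\<Sum>\<xi>\<in>{\<xi>\<in>J. y \<le> \<phi> \<xi>}. w \<xi>)" by (simp add: sum_distrib_left)
        also have "\<dots> \<le> 2 * y * (Mr / y)" using lim True by (intro mult_left_mono) auto
        also have "\<dots> = 2 * Mr * indicator {0..T} y" using True by auto
        finally show ?thesis .
      next
        case False
        have "(\<Sum>\<xi>\<in>J'. 2 * w \<xi> * (y powr 1 * indicator {0..\<phi> \<xi>} y)) = 0"
        proof (rule sum.neutral, intro ballI)
          fix \<xi> assume "\<xi> \<in> J'"
          then have "\<phi> \<xi> < T" by (auto simp: J'_def)
          then show "2 * w \<xi> * (y powr 1 * indicator {0..\<phi> \<xi>} y) = 0"
            using False by (auto simp: indicator_def)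
        qed
        then show ?thesis using Mr by (simp add: indicator_def)
      qed
    qed
    also have "\<dots> = ennreal (2 * Mr) * indicator {0..T} y"
      by (simp split: split_indicator)
    finally show "(\<Sum>\<xi>\<in>J'. ennreal (2 * w \<xi>) * (ennreal (y powr 1) * indicator {0..\<phi> \<xi>} y))
        \<le> ennreal (2 * Mr) * indicator {0..T} y" .
  qed
  also have "\<dots> = ennreal (2 * Mr * T)"
    using T Mr by (simp add: nn_integral_cmult_indicator ennreal_mult)
  finally show ?thesis unfolding J'_def using Mr T by (simp add: ennreal_le_iff)
qed


lemma cnj_measurable:
  assumes "w \<in> borel_measurable M"
  shows "(\<lambda>x. cnj (w x)) \<in> borel_measurable M"
  by (rule borel_measurable_continuous_on[OF _ assms]) (auto intro: continuous_intros)

lemma linf_AE: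
  assumes "in_Linf M g"
  shows "AE x in M. cmod (g x) \<le> Linf_norm M g"
proof -
  have fin: "esssup M (\<lambda>x. ereal (cmod (g x))) < \<infinity>" using assms by (auto simp: in_Linf_def)
  show ?thesis
    using esssup_AE[of "\<lambda>x. ereal (cmod (g x))" M]
  proof eventually_elim
    case (elim x)
    then show ?case using fin unfolding Linf_norm_def
      by (cases "esssup M (\<lambda>x. ereal (cmod (g x)))") auto
  qed
qed

lemma ft_L1:
  assumes g: "g \<in> borel_measurable M" "integrable M (\<lambda>x. cmod (g x))" and w: "in_Linf M w"
  shows "integrable M (\<lambda>x. g x * cnj (w x))"
    and "cmod (\<integral>x. g x * cnj (w x) \<partial>M) \<le> Linf_norm M w * (\<integral>x. cmod (g x) \<partial>M)"
proof -
  have wm: "w \<in> borel_measurable M" using w by (auto simp: in_Linf_def)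
  have ae: "AE x in M. norm (g x * cnj (w x)) \<le> Linf_norm M w * cmod (g x)"
    using linf_AE[OF w] by eventually_elim (simp add: norm_mult, metis mult.commute mult_left_mono norm_ge_zero)
  have i2: "integrable M (\<lambda>x. Linf_norm M w * cmod (g x))" using g by auto
  show i1: "integrable M (\<lambda>x. g x * cnj (w x))"
    by (rule Bochner_Integration.integrable_bound[OF i2]) (use g wm ae in \<open>auto elim!: eventually_mono intro!: borel_measurable_times cnj_measurable\<close>)
  have "cmod (\<integral>x. g x * cnj (w x) \<partial>M) \<le> (\<integral>x. norm (g x * cnj (w x)) \<partial>M)"
    by (rule integral_norm_bound)
  also have "\<dots> \<le> (\<integral>x. Linf_norm M w * cmod (g x) \<partial>M)"
    by (rule integral_mono_AE[OF _ i2 ae]) (use i1 in auto)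
  finally show "cmod (\<integral>x. g x * cnj (w x) \<partial>M) \<le> Linf_norm M w * (\<integral>x. cmod (g x) \<partial>M)" by simp
qed

lemma linf_pos:
  assumes "in_Lp M 2 v" "Lp_norm M 2 v = 1" "in_Linf M v"
  shows "0 < Linf_norm M v"
proof (rule ccontr)
  assume nl: "\<not> 0 < Linf_norm M v"
  from linf_AE[OF assms(3)] have "AE x in M. cmod (v x) powr 2 = 0"
    by eventually_elim (use nl in \<open>auto simp del: norm_le_zero_iff simp add: not_less, metis norm_le_zero_iff order_trans\<close>)
  then have "(\<integral>x. cmod (v x) powr 2 \<partial>M) = (\<integral>x. 0 \<partial>M)"
    by (intro integral_cong_AE) (use assms(1) in \<open>auto simp: in_Lp_def\<close>)
  then have "Lp_norm M 2 v = 0" by (simp add: Lp_norm_def)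
  then show False using assms(2) by simp
qed

lemma in_Lp2_iff: "in_Lp M 2 f \<longleftrightarrow> f \<in> borel_measurable M \<and> integrable M (\<lambda>x. (cmod (f x))\<^sup>2)"
  by (simp add: in_Lp_def powr_numeral)

lemma L2_prod_integrable:
  assumes "in_Lp M 2 g" "in_Lp M 2 w"
  shows "integrable M (\<lambda>x. g x * cnj (w x))"
proof -
  have i: "integrable M (\<lambda>x. (cmod (g x))\<^sup>2 + (cmod (w x))\<^sup>2)" using assms by (auto simp: in_Lp2_iff)
  show ?thesis
  proof (rule Bochner_Integration.integrable_bound[OF i])
    show "(\<lambda>x. g x * cnj (w x)) \<in> borel_measurable M" using assms by (auto simp: in_Lp2_iff intro!: borel_measurable_times cnj_measurable)
    show "AE x in M. norm (g x * cnj (w x)) \<le> norm ((cmod (g x))\<^sup>2 + (cmod (w x))\<^sup>2)"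
    proof (intro AE_I2)
      fix x
      have "cmod (g x) * cmod (w x) \<le> (cmod (g x))\<^sup>2 + (cmod (w x))\<^sup>2"
      proof -
        have "0 \<le> cmod (g x) * cmod (w x)" by simp
        then show ?thesis using sum_squares_bound[of "cmod (g x)" "cmod (w x)"] by linarith
      qed
      then show "norm (g x * cnj (w x)) \<le> norm ((cmod (g x))\<^sup>2 + (cmod (w x))\<^sup>2)"
        by (simp add: norm_mult abs_of_nonneg)
    qed
  qed
qed

lemma Lp2_add:
  assumes "in_Lp M 2 f" "in_Lp M 2 g"
  shows "in_Lp M 2 (\<lambda>x. f x + g x)"
proof -
  have i: "integrable M (\<lambda>x. 2 * (cmod (f x))\<^sup>2 + 2 * (cmod (g x))\<^sup>2)" using assms by (auto simp: in_Lp2_iff)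
  have m: "(\<lambda>x. f x + g x) \<in> borel_measurable M" using assms by (auto simp: in_Lp2_iff)
  have "integrable M (\<lambda>x. (cmod (f x + g x))\<^sup>2)"
  proof (rule Bochner_Integration.integrable_bound[OF i])
    show "(\<lambda>x. (cmod (f x + g x))\<^sup>2) \<in> borel_measurable M" using m by auto
    show "AE x in M. norm ((cmod (f x + g x))\<^sup>2) \<le> norm (2 * (cmod (f x))\<^sup>2 + 2 * (cmod (g x))\<^sup>2)"
    proof (intro AE_I2)
      fix x
      have t: "cmod (f x + g x) \<le> cmod (f x) + cmod (g x)" by (rule norm_triangle_ineq)
      have "(cmod (f x + g x))\<^sup>2 \<le> (cmod (f x) + cmod (g x))\<^sup>2"
        using t by (intro power_mono) auto
      also have "\<dots> \<le> 2 * (cmod (f x))\<^sup>2 + 2 * (cmod (g x))\<^sup>2"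
        using sum_squares_bound[of "cmod (f x)" "cmod (g x)"] by (simp add: power2_sum)
      finally show "norm ((cmod (f x + g x))\<^sup>2) \<le> norm (2 * (cmod (f x))\<^sup>2 + 2 * (cmod (g x))\<^sup>2)"
        by simp
    qed
  qed
  then show ?thesis using m unfolding in_Lp2_iff by blast
qed

lemma Lp2_cmult:
  assumes "in_Lp M 2 f"
  shows "in_Lp M 2 (\<lambda>x. c * f x)"
proof -
  have fm: "f \<in> borel_measurable M" and fi: "integrable M (\<lambda>x. (cmod (f x))\<^sup>2)"
    using assms unfolding in_Lp2_iff by auto
  have m: "(\<lambda>x. c * f x) \<in> borel_measurable M"
    by (rule borel_measurable_times[OF borel_measurable_const fm])
  have "integrable M (\<lambda>x. (cmod c)\<^sup>2 * (cmod (f x))\<^sup>2)"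
    by (rule integrable_mult_right[OF fi])
  moreover have "(\<lambda>x. (cmod c)\<^sup>2 * (cmod (f x))\<^sup>2) = (\<lambda>x. (cmod (c * f x))\<^sup>2)"
    by (simp add: norm_mult power_mult_distrib)
  ultimately have "integrable M (\<lambda>x. (cmod (c * f x))\<^sup>2)" by simp
  then show ?thesis using m unfolding in_Lp2_iff by blast
qed

lemma Lp2_sum:
  assumes "finite J" "\<forall>\<xi>\<in>J. in_Lp M 2 (f \<xi>)"
  shows "in_Lp M 2 (\<lambda>x. \<Sum>\<xi>\<in>J. f \<xi> x)"
  using assms
proof (induction J rule: finite_induct)
  case empty
  then show ?case unfolding in_Lp2_iff by simp
next
  case (insert a J)
  then show ?case using Lp2_add[of M "f a" "\<lambda>x. \<Sum>\<xi>\<in>J. f \<xi> x"] by auto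
qed



lemma amgm_B:
  fixes a b B :: real
  assumes "0 < B"
  shows "a * b \<le> B / 2 * a\<^sup>2 + b\<^sup>2 / (2 * B)"
proof -
  have "2 * (B * a) * b \<le> (B * a)\<^sup>2 + b\<^sup>2" by (rule sum_squares_bound)
  then have "2 * B * (a * b) \<le> B\<^sup>2 * a\<^sup>2 + b\<^sup>2" by (simp add: power_mult_distrib algebra_simps)
  then have "(2 * B * (a * b)) / (2 * B) \<le> (B\<^sup>2 * a\<^sup>2 + b\<^sup>2) / (2 * B)"
    using assms by (intro divide_right_mono) auto
  also have "(2 * B * (a * b)) / (2 * B) = a * b" using assms by simp
  also have "(B\<^sup>2 * a\<^sup>2 + b\<^sup>2) / (2 * B) = B / 2 * a\<^sup>2 + b\<^sup>2 / (2 * B)"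
    using assms by (simp add: field_simps power2_eq_square)
  finally show ?thesis .
qed

lemma bessel:
  fixes u :: "'i \<Rightarrow> 'a \<Rightarrow> complex"
  assumes uL2: "\<forall>\<xi>\<in>I. in_Lp M 2 (u \<xi>)"
    and B: "0 < B"
    and rz: "\<forall>J c. finite J \<longrightarrow> J \<subseteq> I \<longrightarrow> (Lp_norm M 2 (\<lambda>x. \<Sum>\<xi>\<in>J. c \<xi> * u \<xi> x))\<^sup>2 \<le> B * (\<Sum>\<xi>\<in>J. (cmod (c \<xi>))\<^sup>2)"
    and g: "in_Lp M 2 g" and J: "finite J" "J \<subseteq> I"
  shows "(\<Sum>\<xi>\<in>J. (cmod (FT_Lstar M u g \<xi>))\<^sup>2) \<le> B * (\<integral>x. (cmod (g x))\<^sup>2 \<partial>M)"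
proof -
  define c where "c \<xi> = FT_Lstar M u g \<xi>" for \<xi>
  define h where "h x = (\<Sum>\<xi>\<in>J. c \<xi> * u \<xi> x)" for x
  define S where "S = (\<Sum>\<xi>\<in>J. (cmod (c \<xi>))\<^sup>2)"
  define G where "G = (\<integral>x. (cmod (g x))\<^sup>2 \<partial>M)"
  define H where "H = (\<integral>x. (cmod (h x))\<^sup>2 \<partial>M)"
  have uJ: "\<forall>\<xi>\<in>J. in_Lp M 2 (u \<xi>)" using uL2 J by auto
  have hL2: "in_Lp M 2 h" unfolding h_def
    using Lp2_sum[OF J(1), of M "\<lambda>\<xi> x. c \<xi> * u \<xi> x"] uJ Lp2_cmult by blast
  have H0: "0 \<le> H" unfolding H_def by simp
  have e: "(\<integral>x. cmod (h x) powr 2 \<partial>M) = H"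
    unfolding H_def by (rule Bochner_Integration.integral_cong) (simp_all add: powr_numeral)
  have "Lp_norm M 2 h = H powr (1 / 2)" unfolding Lp_norm_def e by simp
  also have "\<dots> = sqrt H" by (rule powr_half_sqrt[OF H0])
  finally have "Lp_norm M 2 h = sqrt H" .
  then have "(Lp_norm M 2 h)\<^sup>2 = H" using H0 by simp
  moreover have "(Lp_norm M 2 h)\<^sup>2 \<le> B * S"
    unfolding S_def h_def by (rule rz[rule_format, OF J(1) J(2)])
  ultimately have HS: "H \<le> B * S" by simp
  have ig: "integrable M (\<lambda>x. g x * cnj (u \<xi> x))" if "\<xi> \<in> J" for \<xi>
    using L2_prod_integrable[OF g] uJ that by auto
  have "(\<integral>x. g x * cnj (h x) \<partial>M) = (\<integral>x. (\<Sum>\<xi>\<in>J. cnj (c \<xi>) * (g x * cnj (u \<xi> x))) \<partial>M)"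
    unfolding h_def by (simp add: sum_distrib_left mult.left_commute)
  also have "\<dots> = (\<Sum>\<xi>\<in>J. (\<integral>x. cnj (c \<xi>) * (g x * cnj (u \<xi> x)) \<partial>M))"
    by (rule Bochner_Integration.integral_sum) (use ig in \<open>auto intro: integrable_mult_right\<close>)
  also have "\<dots> = (\<Sum>\<xi>\<in>J. cnj (c \<xi>) * (\<integral>x. g x * cnj (u \<xi> x) \<partial>M))"
    by (intro sum.cong refl) simp
  also have "\<dots> = (\<Sum>\<xi>\<in>J. of_real ((cmod (c \<xi>))\<^sup>2))"
    unfolding c_def FT_Lstar_def complex_norm_square by (intro sum.cong refl) (rule mult.commute)
  also have "\<dots> = of_real S" unfolding S_def by simp
  finally have inner: "(\<integral>x. g x * cnj (h x) \<partial>M) = of_real S" .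
  have S0: "0 \<le> S" unfolding S_def by (simp add: sum_nonneg)
  have igh: "integrable M (\<lambda>x. g x * cnj (h x))" by (rule L2_prod_integrable[OF g hL2])
  have ig2: "integrable M (\<lambda>x. (cmod (g x))\<^sup>2)" and ih2: "integrable M (\<lambda>x. (cmod (h x))\<^sup>2)"
    using g hL2 by (auto simp: in_Lp2_iff)
  have "S = cmod (\<integral>x. g x * cnj (h x) \<partial>M)" using inner S0 by simp
  also have "\<dots> \<le> (\<integral>x. norm (g x * cnj (h x)) \<partial>M)" by (rule integral_norm_bound)
  also have "\<dots> \<le> (\<integral>x. B / 2 * (cmod (g x))\<^sup>2 + (cmod (h x))\<^sup>2 / (2 * B) \<partial>M)"
    by (rule integral_mono[OF integrable_norm[OF igh]]) (use ig2 ih2 amgm_B[OF B] in \<open>auto simp: norm_mult\<close>)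
  also have "\<dots> = B / 2 * G + H / (2 * B)"
    unfolding G_def H_def using ig2 ih2 by simp
  also have "\<dots> \<le> B / 2 * G + S / 2"
    using HS B by (simp add: field_simps)
  finally have "S \<le> B / 2 * G + S / 2" .
  then have "S \<le> B * G" by simp
  then show ?thesis unfolding S_def G_def c_def .
qed


lemma f1_L1:
  assumes f: "in_Lp M p f" and p: "1 < p" and s: "0 < s"
  shows "(\<lambda>x. if s < cmod (f x) then f x else 0) \<in> borel_measurable M"
    and "integrable M (\<lambda>x. cmod (if s < cmod (f x) then f x else 0))"
proof -
  have fm: "f \<in> borel_measurable M" and fi: "integrable M (\<lambda>x. cmod (f x) powr p)"
    using f by (auto simp: in_Lp_def)
  note fm[measurable]
  show m: "(\<lambda>x. if s < cmod (f x) then f x else 0) \<in> borel_measurable M" by measurable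
  show "integrable M (\<lambda>x. cmod (if s < cmod (f x) then f x else 0))"
  proof (rule Bochner_Integration.integrable_bound)
    show "integrable M (\<lambda>x. s powr (1 - p) * cmod (f x) powr p)" using fi by auto
    show "(\<lambda>x. cmod (if s < cmod (f x) then f x else 0)) \<in> borel_measurable M" using m by measurable
    show "AE x in M. norm (cmod (if s < cmod (f x) then f x else 0)) \<le> norm (s powr (1 - p) * cmod (f x) powr p)"
    proof (intro AE_I2)
      fix x
      show "norm (cmod (if s < cmod (f x) then f x else 0)) \<le> norm (s powr (1 - p) * cmod (f x) powr p)"
      proof (cases "s < cmod (f x)")
        case True
        then have r: "0 < cmod (f x)" using s by linarith
        have "cmod (f x) = cmod (f x) powr (1 - p) * cmod (f x) powr p"
          using r by (simp flip: powr_add)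
        also have "\<dots> \<le> s powr (1 - p) * cmod (f x) powr p"
          using True s p by (intro mult_right_mono powr_mono2') auto
        finally show ?thesis using True by simp
      qed auto
    qed
  qed
qed

lemma f2_L2:
  assumes f: "in_Lp M p f" and p: "p \<le> 2" and s: "0 < s"
  shows "in_Lp M 2 (\<lambda>x. if cmod (f x) \<le> s then f x else 0)"
proof -
  have fm: "f \<in> borel_measurable M" and fi: "integrable M (\<lambda>x. cmod (f x) powr p)"
    using f by (auto simp: in_Lp_def)
  note fm[measurable]
  have m: "(\<lambda>x. if cmod (f x) \<le> s then f x else 0) \<in> borel_measurable M" by measurable
  have "integrable M (\<lambda>x. (cmod (if cmod (f x) \<le> s then f x else 0))\<^sup>2)"
  proof (rule Bochner_Integration.integrable_bound)
    show "integrable M (\<lambda>x. s powr (2 - p) * cmod (f x) powr p)" using fi by auto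
    show "(\<lambda>x. (cmod (if cmod (f x) \<le> s then f x else 0))\<^sup>2) \<in> borel_measurable M" using m by measurable
    show "AE x in M. norm ((cmod (if cmod (f x) \<le> s then f x else 0))\<^sup>2) \<le> norm (s powr (2 - p) * cmod (f x) powr p)"
    proof (intro AE_I2)
      fix x
      show "norm ((cmod (if cmod (f x) \<le> s then f x else 0))\<^sup>2) \<le> norm (s powr (2 - p) * cmod (f x) powr p)"
      proof (cases "cmod (f x) \<le> s")
        case True
        have "(cmod (f x))\<^sup>2 = cmod (f x) powr (2 - p) * cmod (f x) powr p"
          by (simp flip: powr_add add: powr_numeral)
        also have "\<dots> \<le> s powr (2 - p) * cmod (f x) powr p"
          using True s p by (intro mult_right_mono powr_mono2) auto
        finally show ?thesis using True by simp
      qed auto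
    qed
  qed
  then show ?thesis using m unfolding in_Lp2_iff by blast
qed



lemma count_bound:
  fixes u :: "'i \<Rightarrow> 'a \<Rightarrow> complex" and a \<phi> :: "'i \<Rightarrow> real"
  assumes J: "finite J"
    and a: "\<forall>\<xi>\<in>J. 0 < a \<xi>" and ph: "\<forall>\<xi>\<in>J. 0 < \<phi> \<xi>"
    and uinf: "\<forall>\<xi>\<in>J. in_Linf M (u \<xi>)" and uL2: "\<forall>\<xi>\<in>J. in_Lp M 2 (u \<xi>)"
    and Kb: "\<forall>\<xi>\<in>J. Linf_norm M (u \<xi>) \<le> K * a \<xi>" and K: "0 \<le> K" and B: "0 < B"
    and bes: "\<forall>g. in_Lp M 2 g \<longrightarrow> (\<Sum>\<xi>\<in>J. (cmod (FT_Lstar M u g \<xi>))\<^sup>2) \<le> B * (\<integral>x. (cmod (g x))\<^sup>2 \<partial>M)"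
    and lim: "\<forall>t>0. (\<Sum>\<xi>\<in>{\<xi>\<in>J. t \<le> \<phi> \<xi>}. (a \<xi>)\<^sup>2) \<le> Mr / t"
    and y: "0 < y"
    and f1: "f1 \<in> borel_measurable M" "integrable M (\<lambda>x. cmod (f1 x))"
    and f2: "in_Lp M 2 f2"
    and f: "\<forall>x. f x = f1 x + f2 x"
  shows "(\<Sum>\<xi>\<in>J. (a \<xi> * \<phi> \<xi>)\<^sup>2 * indicator {0..cmod (FT_Lstar M u f \<xi>) / (a \<xi> * \<phi> \<xi>)} y)
     \<le> 4 * Mr * K / y * (\<integral>x. cmod (f1 x) \<partial>M) + 4 * B / y\<^sup>2 * (\<integral>x. (cmod (f2 x))\<^sup>2 \<partial>M)"
proof -
  define N1 where "N1 = (\<integral>x. cmod (f1 x) \<partial>M)"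
  define N2 where "N2 = (\<integral>x. (cmod (f2 x))\<^sup>2 \<partial>M)"
  define T where "T = 2 * K * N1 / y"
  have N1: "0 \<le> N1" by (simp add: N1_def)
  have T0: "0 \<le> T" using K N1 y by (simp add: T_def)
  define G2 where "G2 \<xi> = cmod (FT_Lstar M u f2 \<xi>)" for \<xi>
  have split: "cmod (FT_Lstar M u f \<xi>) \<le> K * a \<xi> * N1 + G2 \<xi>" if x: "\<xi> \<in> J" for \<xi>
  proof -
    have i1: "integrable M (\<lambda>x. f1 x * cnj (u \<xi> x))" using ft_L1(1)[OF f1] uinf x by auto
    have b1: "cmod (FT_Lstar M u f1 \<xi>) \<le> Linf_norm M (u \<xi>) * N1"
      unfolding FT_Lstar_def N1_def using ft_L1(2)[OF f1] uinf x by auto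
    have i2: "integrable M (\<lambda>x. f2 x * cnj (u \<xi> x))" using L2_prod_integrable[OF f2] uL2 x by auto
    have "FT_Lstar M u f \<xi> = (\<integral>x. f1 x * cnj (u \<xi> x) + f2 x * cnj (u \<xi> x) \<partial>M)"
      unfolding FT_Lstar_def using f by (simp add: distrib_right)
    also have "\<dots> = FT_Lstar M u f1 \<xi> + FT_Lstar M u f2 \<xi>"
      unfolding FT_Lstar_def by (rule Bochner_Integration.integral_add[OF i1 i2])
    finally have "cmod (FT_Lstar M u f \<xi>) \<le> cmod (FT_Lstar M u f1 \<xi>) + G2 \<xi>"
      unfolding G2_def by (simp add: norm_triangle_ineq)
    also have "\<dots> \<le> Linf_norm M (u \<xi>) * N1 + G2 \<xi>" using b1 by simp
    also have "\<dots> \<le> K * a \<xi> * N1 + G2 \<xi>" using Kb x N1 by (simp add: mult_right_mono)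
    finally show ?thesis .
  qed
  have each: "(a \<xi> * \<phi> \<xi>)\<^sup>2 * indicator {0..cmod (FT_Lstar M u f \<xi>) / (a \<xi> * \<phi> \<xi>)} y
      \<le> (if \<phi> \<xi> < T then (a \<xi>)\<^sup>2 * (\<phi> \<xi>)\<^sup>2 else 0) + 4 / y\<^sup>2 * (G2 \<xi>)\<^sup>2" if x: "\<xi> \<in> J" for \<xi>
  proof (cases "y \<le> cmod (FT_Lstar M u f \<xi>) / (a \<xi> * \<phi> \<xi>)")
    case False
    then show ?thesis by (simp add: indicator_def)
  next
    case True
    have ap: "0 < a \<xi> * \<phi> \<xi>" using a ph x by simp
    have ge: "a \<xi> * \<phi> \<xi> * y \<le> cmod (FT_Lstar M u f \<xi>)"
      using True ap by (simp add: pos_le_divide_eq mult.commute)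
    have ind: "indicator {0..cmod (FT_Lstar M u f \<xi>) / (a \<xi> * \<phi> \<xi>)} y = (1::real)"
      using True y by (simp add: indicator_def)
    show ?thesis
    proof (cases "a \<xi> * \<phi> \<xi> * y / 2 \<le> G2 \<xi>")
      case True
      have "a \<xi> * \<phi> \<xi> \<le> 2 * G2 \<xi> / y" using True y by (simp add: field_simps)
      then have "(a \<xi> * \<phi> \<xi>)\<^sup>2 \<le> (2 * G2 \<xi> / y)\<^sup>2" using ap by (intro power_mono) auto
      also have "\<dots> = 4 / y\<^sup>2 * (G2 \<xi>)\<^sup>2" by (simp add: power_divide power_mult_distrib)
      finally have "(a \<xi> * \<phi> \<xi>)\<^sup>2 \<le> 4 / y\<^sup>2 * (G2 \<xi>)\<^sup>2" .
      moreover have "0 \<le> (if \<phi> \<xi> < T then (a \<xi>)\<^sup>2 * (\<phi> \<xi>)\<^sup>2 else 0)" by simp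
      ultimately show ?thesis unfolding ind by linarith
    next
      case False
      have "a \<xi> * \<phi> \<xi> * y \<le> K * a \<xi> * N1 + G2 \<xi>" using ge split[OF x] by linarith
      then have "a \<xi> * (\<phi> \<xi> * y / 2) < a \<xi> * (K * N1)" using False by (simp add: algebra_simps)
      then have "\<phi> \<xi> * y / 2 < K * N1" using a x by (simp add: mult_less_cancel_left_pos)
      then have "\<phi> \<xi> < T" using y by (simp add: T_def field_simps)
      then show ?thesis using ind by (simp add: power_mult_distrib)
    qed
  qed
  have "(\<Sum>\<xi>\<in>J. (a \<xi> * \<phi> \<xi>)\<^sup>2 * indicator {0..cmod (FT_Lstar M u f \<xi>) / (a \<xi> * \<phi> \<xi>)} y)
      \<le> (\<Sum>\<xi>\<in>J. (if \<phi> \<xi> < T then (a \<xi>)\<^sup>2 * (\<phi> \<xi>)\<^sup>2 else 0) + 4 / y\<^sup>2 * (G2 \<xi>)\<^sup>2)"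
    using each by (rule sum_mono)
  also have "\<dots> = (\<Sum>\<xi>\<in>{\<xi>\<in>J. \<phi> \<xi> < T}. (a \<xi>)\<^sup>2 * (\<phi> \<xi>)\<^sup>2) + 4 / y\<^sup>2 * (\<Sum>\<xi>\<in>J. (G2 \<xi>)\<^sup>2)"
    by (simp add: sum.distrib sum_distrib_left sum.inter_filter[OF J])
  also have "\<dots> \<le> 2 * Mr * T + 4 / y\<^sup>2 * (B * N2)"
  proof (rule add_mono)
    show "(\<Sum>\<xi>\<in>{\<xi>\<in>J. \<phi> \<xi> < T}. (a \<xi>)\<^sup>2 * (\<phi> \<xi>)\<^sup>2) \<le> 2 * Mr * T"
      by (rule weak_layer[OF J _ ph T0 lim]) simp
    show "4 / y\<^sup>2 * (\<Sum>\<xi>\<in>J. (G2 \<xi>)\<^sup>2) \<le> 4 / y\<^sup>2 * (B * N2)"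
      using bes f2 unfolding G2_def N2_def by (intro mult_left_mono) auto
  qed
  also have "\<dots> = 4 * Mr * K / y * N1 + 4 * B / y\<^sup>2 * N2" by (simp add: T_def)
  finally show ?thesis unfolding N1_def N2_def .
qed



lemma ennreal_ind: "ennreal (x * indicator S y) = ennreal x * indicator S y"
  by (simp split: split_indicator)

lemma inner_A:
  fixes p Mr K r :: real
  assumes p: "1 < p" and Mr: "0 < Mr" and K: "0 \<le> K" and r: "0 \<le> r"
  shows "(\<integral>\<^sup>+y. ennreal (p * y powr (p-1) * indicator {0<..} y * (4*Mr*K/y * (if Mr*y < r then r else 0))) \<partial>lborel)
         = ennreal (4*K*p/(p-1) * Mr powr (2-p) * r powr p)"
proof -
  have pt: "p * y powr (p-1) * indicator {0<..} y * (4*Mr*K/y * (if Mr*y < r then r else 0))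
      = (4*Mr*K*p*r) * (y powr (p-2) * indicator {0<..<r/Mr} y)" for y
  proof (cases "0 < y \<and> Mr*y < r")
    case True
    have "y powr (p-1) = y powr ((p-2) + 1)" by simp
    also have "\<dots> = y powr (p-2) * y powr 1" by (rule powr_add)
    also have "\<dots> = y powr (p-2) * y" using True by simp
    finally have "y powr (p-1) = y powr (p-2) * y" .
    moreover have "y < r/Mr" using True Mr by (simp add: field_simps)
    ultimately show ?thesis using True by (simp add: indicator_def field_simps)
  next
    case False
    then have "\<not> (0 < y \<and> y < r/Mr)" using Mr by (auto simp: field_simps)
    then show ?thesis using False by (auto simp: indicator_def)
  qed
  have c0: "0 \<le> 4*Mr*K*p*r" using Mr K p r by simp
  have "(\<integral>\<^sup>+y. ennreal (p * y powr (p-1) * indicator {0<..} y * (4*Mr*K/y * (if Mr*y < r then r else 0))) \<partial>lborel)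
      = (\<integral>\<^sup>+y. ennreal (4*Mr*K*p*r) * (ennreal (y powr (p-2)) * indicator {0<..<r/Mr} y) \<partial>lborel)"
    unfolding pt using c0 by (simp add: ennreal_mult ennreal_ind)
  also have "\<dots> = ennreal (4*Mr*K*p*r) * (\<integral>\<^sup>+y. ennreal (y powr (p-2)) * indicator {0<..<r/Mr} y \<partial>lborel)"
    by (rule nn_integral_cmult) auto
  also have "(\<integral>\<^sup>+y. ennreal (y powr (p-2)) * indicator {0<..<r/Mr} y \<partial>lborel) = ennreal ((r/Mr) powr (p-1) / (p-1))"
    using powr_int_0'[of "p-2" "r/Mr"] p Mr r by simp
  also have "ennreal (4*Mr*K*p*r) * ennreal ((r/Mr) powr (p-1) / (p-1)) = ennreal (4*Mr*K*p*r * ((r/Mr) powr (p-1) / (p-1)))"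
    by (rule ennreal_mult[symmetric]) (use c0 p in auto)
  also have "4*Mr*K*p*r * ((r/Mr) powr (p-1) / (p-1)) = 4*K*p/(p-1) * Mr powr (2-p) * r powr p"
  proof -
    have "(r/Mr) powr (p-1) = r powr (p-1) / Mr powr (p-1)" by (rule powr_divide)
    moreover have "Mr / Mr powr (p-1) = Mr powr (2-p)"
    proof -
      have "Mr powr (2-p) = Mr powr (1 - (p-1))" by simp
      also have "\<dots> = Mr powr 1 / Mr powr (p-1)" by (rule powr_diff)
      finally show ?thesis using Mr by simp
    qed
    moreover have "r * r powr (p-1) = r powr p"
    proof (cases "r = 0")
      case False
      then have "r powr p = r powr (1 + (p-1))" by simp
      also have "\<dots> = r powr 1 * r powr (p-1)" by (rule powr_add)
      finally show ?thesis using r by simp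
    qed simp
    ultimately have h: "(r/Mr) powr (p-1) = r powr (p-1) / Mr powr (p-1)"
       "Mr / Mr powr (p-1) = Mr powr (2-p)" "r * r powr (p-1) = r powr p" by auto
    have nz: "Mr powr (p-1) \<noteq> 0" "p - 1 \<noteq> 0" using Mr p by auto
    have "4*Mr*K*p*r * ((r/Mr) powr (p-1) / (p-1)) = 4*K*p/(p-1) * (Mr / Mr powr (p-1)) * (r * r powr (p-1))"
      unfolding h(1) using nz by (simp add: field_simps)
    then show ?thesis unfolding h(2) h(3) .
  qed
  finally show ?thesis .
qed

lemma inner_B:
  fixes p Mr B r :: real
  assumes p: "1 < p" "p < 2" and Mr: "0 < Mr" and B: "0 \<le> B" and r: "0 \<le> r"
  shows "(\<integral>\<^sup>+y. ennreal (p * y powr (p-1) * indicator {0<..} y * (4*B/y\<^sup>2 * (if r \<le> Mr*y then r\<^sup>2 else 0))) \<partial>lborel)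
         \<le> ennreal (4*B*p/(2-p) * Mr powr (2-p) * r powr p)"
proof (cases "r = 0")
  case True
  then have "\<And>y. (if r \<le> Mr*y then r\<^sup>2 else 0) = (0::real)" by simp
  then show ?thesis by simp
next
  case False
  then have r0: "0 < r" using r by simp
  have pt: "p * y powr (p-1) * indicator {0<..} y * (4*B/y\<^sup>2 * (if r \<le> Mr*y then r\<^sup>2 else 0))
      = (4*B*p*r\<^sup>2) * (y powr (p-3) * indicator {r/Mr..} y)" for y
  proof (cases "0 < y \<and> r \<le> Mr*y")
    case True
    have "y powr (p-1) = y powr ((p-3) + 2)" by simp
    also have "\<dots> = y powr (p-3) * y powr 2" by (rule powr_add)
    also have "\<dots> = y powr (p-3) * y\<^sup>2" using True by (simp add: powr_numeral)
    finally have "y powr (p-1) = y powr (p-3) * y\<^sup>2" .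
    moreover have "r/Mr \<le> y" using True Mr by (simp add: field_simps)
    ultimately show ?thesis using True by (simp add: indicator_def field_simps power2_eq_square)
  next
    case False
    have "\<not> (r/Mr \<le> y)"
    proof
      assume h: "r/Mr \<le> y"
      have "0 < r/Mr" using Mr r0 by simp
      then have "0 < y" using h by linarith
      moreover have "r \<le> Mr*y" using h Mr by (simp add: field_simps)
      ultimately show False using False by simp
    qed
    then show ?thesis using False by (auto simp: indicator_def)
  qed
  have c0: "0 \<le> 4*B*p*r\<^sup>2" using B p r by simp
  have "(\<integral>\<^sup>+y. ennreal (p * y powr (p-1) * indicator {0<..} y * (4*B/y\<^sup>2 * (if r \<le> Mr*y then r\<^sup>2 else 0))) \<partial>lborel)
      = (\<integral>\<^sup>+y. ennreal (4*B*p*r\<^sup>2) * (ennreal (y powr (p-3)) * indicator {r/Mr..} y) \<partial>lborel)"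
    unfolding pt using c0 by (simp add: ennreal_mult ennreal_ind)
  also have "\<dots> = ennreal (4*B*p*r\<^sup>2) * (\<integral>\<^sup>+y. ennreal (y powr (p-3)) * indicator {r/Mr..} y \<partial>lborel)"
    by (rule nn_integral_cmult) auto
  also have "(\<integral>\<^sup>+y. ennreal (y powr (p-3)) * indicator {r/Mr..} y \<partial>lborel) = ennreal ((r/Mr) powr (p-2) / (2-p))"
  proof -
    have "(\<integral>\<^sup>+y. ennreal (y powr (p-3)) * indicator {r/Mr..} y \<partial>lborel) = ennreal (-((r/Mr) powr (p-3+1)) / (p-3+1))"
      by (rule powr_int_inf) (use p Mr r0 in auto)
    also have "-((r/Mr) powr (p-3+1)) / (p-3+1) = (r/Mr) powr (p-2) / (2-p)"
      by (simp add: minus_divide_left[symmetric] minus_divide_right)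
    finally show ?thesis .
  qed
  also have "ennreal (4*B*p*r\<^sup>2) * ennreal ((r/Mr) powr (p-2) / (2-p)) = ennreal (4*B*p*r\<^sup>2 * ((r/Mr) powr (p-2) / (2-p)))"
    by (rule ennreal_mult[symmetric]) (use c0 p in auto)
  also have "4*B*p*r\<^sup>2 * ((r/Mr) powr (p-2) / (2-p)) = 4*B*p/(2-p) * Mr powr (2-p) * r powr p"
  proof -
    have h1: "(r/Mr) powr (p-2) = r powr (p-2) / Mr powr (p-2)" by (rule powr_divide)
    have h2: "1 / Mr powr (p-2) = Mr powr (2-p)"
      using powr_minus_divide[of Mr "p-2"] by simp
    have h3: "r\<^sup>2 * r powr (p-2) = r powr p"
    proof -
      have "r powr p = r powr (2 + (p-2))" by simp
      also have "\<dots> = r powr 2 * r powr (p-2)" by (rule powr_add)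
      finally show ?thesis using r by (simp add: powr_numeral)
    qed
    have nz: "Mr powr (p-2) \<noteq> 0" "2 - p \<noteq> 0" using Mr p by auto
    have "4*B*p*r\<^sup>2 * ((r/Mr) powr (p-2) / (2-p)) = 4*B*p/(2-p) * (1 / Mr powr (p-2)) * (r\<^sup>2 * r powr (p-2))"
      unfolding h1 using nz by (simp add: field_simps)
    then show ?thesis unfolding h2 h3 .
  qed
  finally show ?thesis by simp
qed

lemma inner_int:
  fixes p Mr K B :: real and z :: complex
  assumes p: "1 < p" "p < 2" and Mr: "0 < Mr" and K: "0 \<le> K" and B: "0 \<le> B"
  shows "(\<integral>\<^sup>+y. ennreal (p * y powr (p-1) * indicator {0<..} y *
            (4*Mr*K/y * cmod (if Mr*y < cmod z then z else 0) + 4*B/y\<^sup>2 * (cmod (if cmod z \<le> Mr*y then z else 0))\<^sup>2)) \<partial>lborel)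
         \<le> ennreal ((4*K*p/(p-1) + 4*B*p/(2-p)) * Mr powr (2-p) * cmod z powr p)"
proof -
  define r where "r = cmod z"
  have r: "0 \<le> r" by (simp add: r_def)
  define A where "A y = p * y powr (p-1) * indicator {0<..} y * (4*Mr*K/y * (if Mr*y < r then r else 0))" for y :: real
  define Bf where "Bf y = p * y powr (p-1) * indicator {0<..} y * (4*B/y\<^sup>2 * (if r \<le> Mr*y then r\<^sup>2 else 0))" for y :: real
  have A0: "0 \<le> A y" for y
    unfolding A_def using p Mr K r by (auto simp: indicator_def)
  have B0: "0 \<le> Bf y" for y
    unfolding Bf_def using p B r by (auto simp: indicator_def)
  have eq: "p * y powr (p-1) * indicator {0<..} y *
            (4*Mr*K/y * cmod (if Mr*y < cmod z then z else 0) + 4*B/y\<^sup>2 * (cmod (if cmod z \<le> Mr*y then z else 0))\<^sup>2)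
          = A y + Bf y" for y
    unfolding A_def Bf_def r_def by (simp add: algebra_simps)
  have Am: "(\<lambda>y. ennreal (A y)) \<in> borel_measurable lborel" unfolding A_def by measurable
  have Bm: "(\<lambda>y. ennreal (Bf y)) \<in> borel_measurable lborel" unfolding Bf_def by measurable
  have "(\<integral>\<^sup>+y. ennreal (p * y powr (p-1) * indicator {0<..} y *
            (4*Mr*K/y * cmod (if Mr*y < cmod z then z else 0) + 4*B/y\<^sup>2 * (cmod (if cmod z \<le> Mr*y then z else 0))\<^sup>2)) \<partial>lborel)
       = (\<integral>\<^sup>+y. ennreal (A y) + ennreal (Bf y) \<partial>lborel)"
    unfolding eq using A0 B0 by (simp add: ennreal_plus)
  also have "\<dots> = (\<integral>\<^sup>+y. ennreal (A y) \<partial>lborel) + (\<integral>\<^sup>+y. ennreal (Bf y) \<partial>lborel)"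
    by (rule nn_integral_add[OF Am Bm])
  also have "\<dots> \<le> ennreal (4*K*p/(p-1) * Mr powr (2-p) * r powr p) + ennreal (4*B*p/(2-p) * Mr powr (2-p) * r powr p)"
    unfolding A_def Bf_def
    by (intro add_mono inner_B[OF p Mr B r] order.eq_iff[THEN iffD1, THEN conjunct1] inner_A[OF p(1) Mr K r])
  also have "\<dots> = ennreal ((4*K*p/(p-1) + 4*B*p/(2-p)) * Mr powr (2-p) * r powr p)"
    using p K B by (subst ennreal_plus[symmetric]) (auto simp: algebra_simps)
  finally show ?thesis unfolding r_def .
qed



lemma step1:
  fixes p g a \<phi> :: real
  assumes p: "1 < p" and a: "0 < a" and ph: "0 < \<phi>" and g: "0 \<le> g"
  shows "ennreal (g powr p * a powr (2-p) * \<phi> powr (2-p))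
       = (\<integral>\<^sup>+y. ennreal ((a*\<phi>)\<^sup>2 * (p * y powr (p-1) * indicator {0..g/(a*\<phi>)} y)) \<partial>lborel)"
proof -
  define h where "h = g/(a*\<phi>)"
  have ap: "0 < a*\<phi>" using a ph by simp
  have h0: "0 \<le> h" using g ap by (simp add: h_def)
  have c0: "0 \<le> (a*\<phi>)\<^sup>2 * p" using p by simp
  have "(\<integral>\<^sup>+y. ennreal ((a*\<phi>)\<^sup>2 * (p * y powr (p-1) * indicator {0..h} y)) \<partial>lborel)
      = (\<integral>\<^sup>+y. ennreal ((a*\<phi>)\<^sup>2 * p) * (ennreal (y powr (p-1)) * indicator {0..h} y) \<partial>lborel)"
  proof (rule nn_integral_cong)
    fix y :: real
    have "(a*\<phi>)\<^sup>2 * (p * y powr (p-1) * indicator {0..h} y) = ((a*\<phi>)\<^sup>2 * p) * (y powr (p-1) * indicator {0..h} y)"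
      by (simp add: algebra_simps)
    moreover have "ennreal (((a*\<phi>)\<^sup>2 * p) * (y powr (p-1) * indicator {0..h} y)) = ennreal ((a*\<phi>)\<^sup>2 * p) * ennreal (y powr (p-1) * indicator {0..h} y)"
      by (rule ennreal_mult) (use c0 in auto)
    ultimately show "ennreal ((a*\<phi>)\<^sup>2 * (p * y powr (p-1) * indicator {0..h} y)) = ennreal ((a*\<phi>)\<^sup>2 * p) * (ennreal (y powr (p-1)) * indicator {0..h} y)"
      by (simp only: ennreal_ind)
  qed
  also have "\<dots> = ennreal ((a*\<phi>)\<^sup>2 * p) * (\<integral>\<^sup>+y. ennreal (y powr (p-1)) * indicator {0..h} y \<partial>lborel)"
    by (rule nn_integral_cmult) auto
  also have "(\<integral>\<^sup>+y. ennreal (y powr (p-1)) * indicator {0..h} y \<partial>lborel) = ennreal (h powr p / p)"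
    using powr_int_0[of "p-1" h] p h0 by simp
  also have "ennreal ((a*\<phi>)\<^sup>2 * p) * ennreal (h powr p / p) = ennreal ((a*\<phi>)\<^sup>2 * p * (h powr p / p))"
    by (rule ennreal_mult[symmetric]) (use c0 p in auto)
  also have "(a*\<phi>)\<^sup>2 * p * (h powr p / p) = g powr p * a powr (2-p) * \<phi> powr (2-p)"
  proof -
    have "h powr p = g powr p / (a*\<phi>) powr p" unfolding h_def by (rule powr_divide)
    moreover have "(a*\<phi>)\<^sup>2 / (a*\<phi>) powr p = (a*\<phi>) powr (2-p)"
      using ap by (simp add: powr_diff powr_numeral)
    moreover have "(a*\<phi>) powr (2-p) = a powr (2-p) * \<phi> powr (2-p)" by (rule powr_mult)
    moreover have "(a*\<phi>) powr p \<noteq> 0" "p \<noteq> 0" using ap p by auto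
    ultimately show ?thesis by (simp add: field_simps)
  qed
  finally show ?thesis unfolding h_def ..
qed


lemma core:
  fixes M :: "'a measure" and u :: "'i \<Rightarrow> 'a \<Rightarrow> complex" and a \<phi> :: "'i \<Rightarrow> real"
    and f :: "'a \<Rightarrow> complex" and p K B Mr :: real
  assumes sf: "sigma_finite_measure M"
    and p: "1 < p" "p < 2"
    and J: "finite J"
    and a: "\<forall>\<xi>\<in>J. 0 < a \<xi>" and ph: "\<forall>\<xi>\<in>J. 0 < \<phi> \<xi>"
    and uinf: "\<forall>\<xi>\<in>J. in_Linf M (u \<xi>)" and uL2: "\<forall>\<xi>\<in>J. in_Lp M 2 (u \<xi>)"
    and Kb: "\<forall>\<xi>\<in>J. Linf_norm M (u \<xi>) \<le> K * a \<xi>" and K: "0 \<le> K" and B: "0 < B"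
    and bes: "\<forall>g. in_Lp M 2 g \<longrightarrow> (\<Sum>\<xi>\<in>J. (cmod (FT_Lstar M u g \<xi>))\<^sup>2) \<le> B * (\<integral>x. (cmod (g x))\<^sup>2 \<partial>M)"
    and lim: "\<forall>t>0. (\<Sum>\<xi>\<in>{\<xi>\<in>J. t \<le> \<phi> \<xi>}. (a \<xi>)\<^sup>2) \<le> Mr / t"
    and Mr: "0 < Mr"
    and f: "in_Lp M p f"
  shows "(\<Sum>\<xi>\<in>J. cmod (FT_Lstar M u f \<xi>) powr p * a \<xi> powr (2-p) * \<phi> \<xi> powr (2-p))
         \<le> (4*K*p/(p-1) + 4*B*p/(2-p)) * Mr powr (2-p) * (\<integral>x. cmod (f x) powr p \<partial>M)"
proof -
  interpret M: sigma_finite_measure M by (rule sf)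
  interpret PS: pair_sigma_finite M lborel
    by (intro pair_sigma_finite.intro sf lborel.sigma_finite_measure_axioms)
  have fm: "f \<in> borel_measurable M" and fi: "integrable M (\<lambda>x. cmod (f x) powr p)"
    using f by (auto simp: in_Lp_def)
  note fm[measurable]
  define Cst where "Cst = 4*K*p/(p-1) + 4*B*p/(2-p)"
  have Cst0: "0 \<le> Cst" using K B p by (simp add: Cst_def)
  define g where "g \<xi> = cmod (FT_Lstar M u f \<xi>)" for \<xi>
  define f1 where "f1 y x = (if Mr*y < cmod (f x) then f x else 0)" for y x
  define f2 where "f2 y x = (if cmod (f x) \<le> Mr*y then f x else 0)" for y x
  define \<Psi> where "\<Psi> y x = p * y powr (p-1) * indicator {0<..} y *
            (4*Mr*K/y * cmod (if Mr*y < cmod (f x) then f x else 0) + 4*B/y\<^sup>2 * (cmod (if cmod (f x) \<le> Mr*y then f x else 0))\<^sup>2)"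
    for y x
  define L where "L y = (\<Sum>\<xi>\<in>J. (a \<xi> * \<phi> \<xi>)\<^sup>2 * (p * y powr (p-1) * indicator {0..g \<xi>/(a \<xi> * \<phi> \<xi>)} y))" for y
  have "ennreal (\<Sum>\<xi>\<in>J. g \<xi> powr p * a \<xi> powr (2-p) * \<phi> \<xi> powr (2-p))
      = (\<Sum>\<xi>\<in>J. ennreal (g \<xi> powr p * a \<xi> powr (2-p) * \<phi> \<xi> powr (2-p)))"
    by (rule sum_ennreal[symmetric]) auto
  also have "\<dots> = (\<Sum>\<xi>\<in>J. \<integral>\<^sup>+y. ennreal ((a \<xi> * \<phi> \<xi>)\<^sup>2 * (p * y powr (p-1) * indicator {0..g \<xi>/(a \<xi> * \<phi> \<xi>)} y)) \<partial>lborel)"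
    by (intro sum.cong refl step1) (use p a ph in \<open>auto simp: g_def\<close>)
  also have "\<dots> = (\<integral>\<^sup>+y. (\<Sum>\<xi>\<in>J. ennreal ((a \<xi> * \<phi> \<xi>)\<^sup>2 * (p * y powr (p-1) * indicator {0..g \<xi>/(a \<xi> * \<phi> \<xi>)} y))) \<partial>lborel)"
    by (rule nn_integral_sum[symmetric]) auto
  also have "\<dots> = (\<integral>\<^sup>+y. ennreal (L y) \<partial>lborel)"
    unfolding L_def using p by (intro nn_integral_cong sum_ennreal) (auto simp: indicator_def)
  also have "\<dots> \<le> (\<integral>\<^sup>+y. (\<integral>\<^sup>+x. ennreal (\<Psi> y x) \<partial>M) \<partial>lborel)"
  proof (rule nn_integral_mono)
    fix y :: real
    show "ennreal (L y) \<le> (\<integral>\<^sup>+x. ennreal (\<Psi> y x) \<partial>M)"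
    proof (cases "0 < y")
      case False
      have "L y = 0" unfolding L_def
      proof (rule sum.neutral, intro ballI)
        fix \<xi> assume "\<xi> \<in> J"
        show "(a \<xi> * \<phi> \<xi>)\<^sup>2 * (p * y powr (p-1) * indicator {0..g \<xi>/(a \<xi> * \<phi> \<xi>)} y) = 0"
          using False by (cases "y = 0") (auto simp: indicator_def)
      qed
      then show ?thesis by simp
    next
      case True
      have s: "0 < Mr*y" using True Mr by simp
      have f1m: "f1 y \<in> borel_measurable M" "integrable M (\<lambda>x. cmod (f1 y x))"
        unfolding f1_def using f1_L1[OF f p(1) s] by auto
      have f2L: "in_Lp M 2 (f2 y)" unfolding f2_def using f2_L2[OF f _ s] p by auto
      have fsum: "\<forall>x. f x = f1 y x + f2 y x" unfolding f1_def f2_def by auto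
      define N1 where "N1 = (\<integral>x. cmod (f1 y x) \<partial>M)"
      define N2 where "N2 = (\<integral>x. (cmod (f2 y x))\<^sup>2 \<partial>M)"
      have cb: "(\<Sum>\<xi>\<in>J. (a \<xi> * \<phi> \<xi>)\<^sup>2 * indicator {0..g \<xi> / (a \<xi> * \<phi> \<xi>)} y)
          \<le> 4 * Mr * K / y * N1 + 4 * B / y\<^sup>2 * N2"
        unfolding g_def N1_def N2_def
        by (rule count_bound[OF J a ph uinf uL2 Kb K B bes lim True f1m f2L fsum])
      define c where "c = p * y powr (p-1)"
      have c0: "0 \<le> c" using p by (simp add: c_def)
      have "L y = c * (\<Sum>\<xi>\<in>J. (a \<xi> * \<phi> \<xi>)\<^sup>2 * indicator {0..g \<xi> / (a \<xi> * \<phi> \<xi>)} y)"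
        unfolding L_def c_def by (simp add: sum_distrib_left algebra_simps)
      also have "\<dots> \<le> c * (4 * Mr * K / y * N1 + 4 * B / y\<^sup>2 * N2)"
        by (rule mult_left_mono[OF cb c0])
      finally have Lb: "L y \<le> c * (4 * Mr * K / y * N1 + 4 * B / y\<^sup>2 * N2)" .
      have i1: "integrable M (\<lambda>x. cmod (f1 y x))" by (rule f1m(2))
      have i2: "integrable M (\<lambda>x. (cmod (f2 y x))\<^sup>2)" using f2L by (simp add: in_Lp2_iff)
      have Psi_eq: "\<Psi> y x = c * (4*Mr*K/y) * cmod (f1 y x) + c * (4*B/y\<^sup>2) * (cmod (f2 y x))\<^sup>2" for x
        unfolding \<Psi>_def c_def f1_def f2_def using True by (simp add: algebra_simps)
      have iPsi: "integrable M (\<lambda>x. \<Psi> y x)"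
        unfolding Psi_eq using i1 i2 by auto
      have Psi0: "0 \<le> \<Psi> y x" for x
        unfolding Psi_eq using c0 True Mr K B by (intro add_nonneg_nonneg mult_nonneg_nonneg) auto
      have "(\<integral>\<^sup>+x. ennreal (\<Psi> y x) \<partial>M) = ennreal (\<integral>x. \<Psi> y x \<partial>M)"
        by (rule nn_integral_eq_integral[OF iPsi]) (use Psi0 in auto)
      also have "(\<integral>x. \<Psi> y x \<partial>M) = c * (4 * Mr * K / y * N1 + 4 * B / y\<^sup>2 * N2)"
        unfolding Psi_eq N1_def N2_def using i1 i2 by (simp add: algebra_simps)
      finally show ?thesis using Lb by (simp add: ennreal_leI)
    qed
  qed
  also have "\<dots> = (\<integral>\<^sup>+x. (\<integral>\<^sup>+y. ennreal (\<Psi> y x) \<partial>lborel) \<partial>M)"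
    by (rule PS.Fubini') (unfold \<Psi>_def, measurable)
  also have "\<dots> \<le> (\<integral>\<^sup>+x. ennreal (Cst * Mr powr (2-p) * cmod (f x) powr p) \<partial>M)"
    by (rule nn_integral_mono) (unfold \<Psi>_def Cst_def, rule inner_int[OF p Mr K], use B in simp)
  also have "\<dots> = (\<integral>\<^sup>+x. ennreal (Cst * Mr powr (2-p)) * ennreal (cmod (f x) powr p) \<partial>M)"
    using Cst0 by (intro nn_integral_cong) (simp add: ennreal_mult)
  also have "\<dots> = ennreal (Cst * Mr powr (2-p)) * (\<integral>\<^sup>+x. ennreal (cmod (f x) powr p) \<partial>M)"
    by (rule nn_integral_cmult) measurable
  also have "(\<integral>\<^sup>+x. ennreal (cmod (f x) powr p) \<partial>M) = ennreal (\<integral>x. cmod (f x) powr p \<partial>M)"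
    by (rule nn_integral_eq_integral[OF fi]) auto
  also have "ennreal (Cst * Mr powr (2-p)) * ennreal (\<integral>x. cmod (f x) powr p \<partial>M)
      = ennreal (Cst * Mr powr (2-p) * (\<integral>x. cmod (f x) powr p \<partial>M))"
    by (rule ennreal_mult[symmetric]) (use Cst0 in auto)
  finally have "ennreal (\<Sum>\<xi>\<in>J. g \<xi> powr p * a \<xi> powr (2-p) * \<phi> \<xi> powr (2-p))
      \<le> ennreal (Cst * Mr powr (2-p) * (\<integral>x. cmod (f x) powr p \<partial>M))" .
  then have "(\<Sum>\<xi>\<in>J. g \<xi> powr p * a \<xi> powr (2-p) * \<phi> \<xi> powr (2-p))
      \<le> Cst * Mr powr (2-p) * (\<integral>x. cmod (f x) powr p \<partial>M)"
    using Cst0 by (subst (asm) ennreal_le_iff) (auto intro!: mult_nonneg_nonneg)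
  then show ?thesis unfolding g_def Cst_def .
qed



lemma lim_from_Mphi:
  fixes v :: "'i \<Rightarrow> 'a \<Rightarrow> complex"
  assumes fin: "M_phi M I v \<phi> < \<infinity>" and J: "finite J" "J \<subseteq> I"
  shows "\<forall>t>0. (\<Sum>\<xi>\<in>{\<xi>\<in>J. t \<le> \<phi> \<xi>}. (Linf_norm M (v \<xi>))\<^sup>2) \<le> enn2real (M_phi M I v \<phi>) / t"
proof (intro allI impI)
  fix t :: real assume t: "0 < t"
  define S where "S = (\<Sum>\<xi>\<in>{\<xi>\<in>J. t \<le> \<phi> \<xi>}. (Linf_norm M (v \<xi>))\<^sup>2)"
  have S0: "0 \<le> S" unfolding S_def by (simp add: sum_nonneg)
  have "ennreal S = (\<Sum>\<xi>\<in>{\<xi>\<in>J. t \<le> \<phi> \<xi>}. ennreal ((Linf_norm M (v \<xi>))\<^sup>2))"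
    unfolding S_def by (rule sum_ennreal[symmetric]) auto
  also have "\<dots> = (\<Sum>\<^sub>\<infinity>\<xi>\<in>{\<xi>\<in>J. t \<le> \<phi> \<xi>}. ennreal ((Linf_norm M (v \<xi>))\<^sup>2))"
    using J by (intro infsum_finite[symmetric]) auto
  also have "\<dots> \<le> (\<Sum>\<^sub>\<infinity>\<xi>\<in>{\<xi>\<in>I. t \<le> \<phi> \<xi>}. ennreal ((Linf_norm M (v \<xi>))\<^sup>2))"
    using J by (intro infsum_mono_neutral nonneg_summable_on_complete) auto
  finally have "ennreal t * ennreal S \<le> ennreal t * (\<Sum>\<^sub>\<infinity>\<xi>\<in>{\<xi>\<in>I. t \<le> \<phi> \<xi>}. ennreal ((Linf_norm M (v \<xi>))\<^sup>2))"
    by (rule mult_left_mono) simp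
  also have "\<dots> \<le> M_phi M I v \<phi>"
    unfolding M_phi_def using t by (intro SUP_upper) auto
  also have "\<dots> = ennreal (enn2real (M_phi M I v \<phi>))" using fin by simp
  finally have "ennreal (t * S) \<le> ennreal (enn2real (M_phi M I v \<phi>))"
    using t S0 by (simp add: ennreal_mult)
  then have "t * S \<le> enn2real (M_phi M I v \<phi>)" by (simp add: ennreal_le_iff)
  then show "S \<le> enn2real (M_phi M I v \<phi>) / t" using t by (simp add: field_simps)
qed

lemma Mphi_pos:
  fixes v :: "'i \<Rightarrow> 'a \<Rightarrow> complex"
  assumes fin: "M_phi M I v \<phi> < \<infinity>" and x: "\<xi>0 \<in> I" and ph: "0 < \<phi> \<xi>0" and a: "0 < Linf_norm M (v \<xi>0)"
  shows "0 < enn2real (M_phi M I v \<phi>)"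
proof -
  define t where "t = \<phi> \<xi>0"
  have "ennreal ((Linf_norm M (v \<xi>0))\<^sup>2) = (\<Sum>\<^sub>\<infinity>\<xi>\<in>{\<xi>0}. ennreal ((Linf_norm M (v \<xi>))\<^sup>2))" by simp
  also have "\<dots> \<le> (\<Sum>\<^sub>\<infinity>\<xi>\<in>{\<xi>\<in>I. t \<le> \<phi> \<xi>}. ennreal ((Linf_norm M (v \<xi>))\<^sup>2))"
    using x by (intro infsum_mono_neutral nonneg_summable_on_complete) (auto simp: t_def)
  finally have "ennreal t * ennreal ((Linf_norm M (v \<xi>0))\<^sup>2) \<le> ennreal t * (\<Sum>\<^sub>\<infinity>\<xi>\<in>{\<xi>\<in>I. t \<le> \<phi> \<xi>}. ennreal ((Linf_norm M (v \<xi>))\<^sup>2))"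
    by (rule mult_left_mono) simp
  also have "\<dots> \<le> M_phi M I v \<phi>"
    unfolding M_phi_def using ph by (intro SUP_upper) (auto simp: t_def)
  also have "\<dots> = ennreal (enn2real (M_phi M I v \<phi>))" using fin by simp
  finally have "ennreal (t * (Linf_norm M (v \<xi>0))\<^sup>2) \<le> ennreal (enn2real (M_phi M I v \<phi>))"
    using ph by (simp add: ennreal_mult t_def)
  then have "t * (Linf_norm M (v \<xi>0))\<^sup>2 \<le> enn2real (M_phi M I v \<phi>)" by (simp add: ennreal_le_iff)
  moreover have "0 < t * (Linf_norm M (v \<xi>0))\<^sup>2" using ph a by (simp add: t_def)
  ultimately show ?thesis by linarith
qed


theorem mainTheorem6:
  fixes M :: "'a measure" and I :: "'i set"
    and u v :: "'i \<Rightarrow> 'a \<Rightarrow> complex" and p :: real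
  assumes sf: "sigma_finite_measure M"
    and p: "1 < p" "p \<le> 2"
    and u_L2: "\<forall>\<xi>\<in>I. in_Lp M 2 (u \<xi>) \<and> Lp_norm M 2 (u \<xi>) = 1"
    and v_L2: "\<forall>\<xi>\<in>I. in_Lp M 2 (v \<xi>) \<and> Lp_norm M 2 (v \<xi>) = 1"
    and biorth: "\<forall>\<xi>\<in>I. \<forall>\<eta>\<in>I. L2_inner M (u \<xi>) (v \<eta>) = (if \<xi> = \<eta> then 1 else 0)"
    and riesz: "riesz_basis_L2 M I u"
    and u_inf: "\<forall>\<xi>\<in>I. in_Linf M (u \<xi>)"
    and v_inf: "\<forall>\<xi>\<in>I. in_Linf M (v \<xi>)"
    and ratio: "bdd_above ((\<lambda>\<xi>. Linf_norm M (u \<xi>) / Linf_norm M (v \<xi>)) ` I)"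
  shows "\<exists>C>0. \<forall>\<phi> :: 'i \<Rightarrow> real. (\<forall>\<xi>\<in>I. 0 < \<phi> \<xi>) \<longrightarrow> M_phi M I v \<phi> < \<infinity> \<longrightarrow>
           (\<forall>f. in_Lp M p f \<longrightarrow>
              ((\<lambda>\<xi>. cmod (FT_Lstar M u f \<xi>) powr p * Linf_norm M (v \<xi>) powr (2 - p)
                      * \<phi> \<xi> powr (2 - p)) summable_on I) \<and>
              (\<Sum>\<^sub>\<infinity>\<xi>\<in>I. cmod (FT_Lstar M u f \<xi>) powr p * Linf_norm M (v \<xi>) powr (2 - p)
                      * \<phi> \<xi> powr (2 - p)) powr (1 / p)
                \<le> C * enn2real (M_phi M I v \<phi>) powr ((2 - p) / p) * Lp_norm M p f)"
proof -
  have "\<exists>A B. 0 < A \<and> 0 < B \<and>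
        (\<forall>J c. finite J \<longrightarrow> J \<subseteq> I \<longrightarrow>
           A * (\<Sum>\<xi>\<in>J. (cmod (c \<xi>))\<^sup>2) \<le> (Lp_norm M 2 (\<lambda>x. \<Sum>\<xi>\<in>J. c \<xi> * u \<xi> x))\<^sup>2 \<and>
           (Lp_norm M 2 (\<lambda>x. \<Sum>\<xi>\<in>J. c \<xi> * u \<xi> x))\<^sup>2 \<le> B * (\<Sum>\<xi>\<in>J. (cmod (c \<xi>))\<^sup>2))"
    using riesz unfolding riesz_basis_L2_def by (elim conjE)
  then obtain A B where B: "0 < B"
    and rz0: "\<forall>J c. finite J \<longrightarrow> J \<subseteq> I \<longrightarrow>
           A * (\<Sum>\<xi>\<in>J. (cmod (c \<xi>))\<^sup>2) \<le> (Lp_norm M 2 (\<lambda>x. \<Sum>\<xi>\<in>J. c \<xi> * u \<xi> x))\<^sup>2 \<and>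
           (Lp_norm M 2 (\<lambda>x. \<Sum>\<xi>\<in>J. c \<xi> * u \<xi> x))\<^sup>2 \<le> B * (\<Sum>\<xi>\<in>J. (cmod (c \<xi>))\<^sup>2)"
    by (elim exE conjE)
  have rz: "\<forall>J c. finite J \<longrightarrow> J \<subseteq> I \<longrightarrow> (Lp_norm M 2 (\<lambda>x. \<Sum>\<xi>\<in>J. c \<xi> * u \<xi> x))\<^sup>2 \<le> B * (\<Sum>\<xi>\<in>J. (cmod (c \<xi>))\<^sup>2)"
    using rz0 by blast
  obtain K0 where K0: "\<forall>\<xi>\<in>I. Linf_norm M (u \<xi>) / Linf_norm M (v \<xi>) \<le> K0"
    using ratio unfolding bdd_above_def by auto
  define K where "K = max K0 0"
  have K: "0 \<le> K" by (simp add: K_def)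
  have apos: "\<forall>\<xi>\<in>I. 0 < Linf_norm M (v \<xi>)"
    using v_L2 v_inf linf_pos by blast
  have Kb: "\<forall>\<xi>\<in>I. Linf_norm M (u \<xi>) \<le> K * Linf_norm M (v \<xi>)"
  proof
    fix \<xi> assume x: "\<xi> \<in> I"
    have ap: "0 < Linf_norm M (v \<xi>)" using apos x by auto
    have "Linf_norm M (u \<xi>) / Linf_norm M (v \<xi>) \<le> K" using K0 x by (auto simp: K_def)
    then show "Linf_norm M (u \<xi>) \<le> K * Linf_norm M (v \<xi>)" using ap by (simp add: pos_divide_le_eq)
  qed
  have uL2: "\<forall>\<xi>\<in>I. in_Lp M 2 (u \<xi>)" using u_L2 by auto
  define D where "D = 4*K*p/(p-1) + 4*B*p/(2-p) + B"
  have D0: "0 < D" using K B p by (simp add: D_def add_nonneg_pos)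
  define C where "C = D powr (1/p)"
  have C0: "0 < C" using D0 by (simp add: C_def)
  show ?thesis
  proof (rule exI[of _ C], intro conjI[OF C0] allI impI)
    fix \<phi> :: "'i \<Rightarrow> real" and f :: "'a \<Rightarrow> complex"
    assume ph: "\<forall>\<xi>\<in>I. 0 < \<phi> \<xi>" and fin: "M_phi M I v \<phi> < \<infinity>" and f: "in_Lp M p f"
    define Mr where "Mr = enn2real (M_phi M I v \<phi>)"
    have Mr0: "0 \<le> Mr" by (simp add: Mr_def)
    define N where "N = (\<integral>x. cmod (f x) powr p \<partial>M)"
    have N0: "0 \<le> N" by (simp add: N_def)
    define T where "T \<xi> = cmod (FT_Lstar M u f \<xi>) powr p * Linf_norm M (v \<xi>) powr (2 - p) * \<phi> \<xi> powr (2 - p)" for \<xi>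
    have T0: "0 \<le> T \<xi>" for \<xi> by (simp add: T_def)
    have fs: "sum T J \<le> D * Mr powr (2-p) * N" if J: "finite J" "J \<subseteq> I" for J
    proof (cases "J = {}")
      case True
      then show ?thesis using D0 N0 by simp
    next
      case False
      then obtain \<xi>0 where x0: "\<xi>0 \<in> J" by auto
      have Mr: "0 < Mr" unfolding Mr_def
        by (rule Mphi_pos[OF fin]) (use x0 J ph apos in auto)
      have bes: "\<forall>g. in_Lp M 2 g \<longrightarrow> (\<Sum>\<xi>\<in>J. (cmod (FT_Lstar M u g \<xi>))\<^sup>2) \<le> B * (\<integral>x. (cmod (g x))\<^sup>2 \<partial>M)"
        using bessel[OF uL2 B rz _ J] by blast
      show ?thesis
      proof (cases "p < 2")
        case True
        have "sum T J \<le> (4*K*p/(p-1) + 4*B*p/(2-p)) * Mr powr (2-p) * N"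
          unfolding T_def N_def Mr_def
          by (rule core[OF sf p(1) True J(1)]) (use J apos ph u_inf uL2 Kb K B bes lim_from_Mphi[OF fin J] Mr f in \<open>auto simp: Mr_def\<close>)
        also have "\<dots> \<le> D * Mr powr (2-p) * N"
          unfolding D_def using B N0 by (intro mult_right_mono) auto
        finally show ?thesis .
      next
        case False
        then have p2: "p = 2" using p by simp
        have f2: "in_Lp M 2 f" using f p2 by simp
        have "sum T J = (\<Sum>\<xi>\<in>J. (cmod (FT_Lstar M u f \<xi>))\<^sup>2)"
          unfolding T_def p2
        proof (intro sum.cong refl)
          fix \<xi> assume x: "\<xi> \<in> J"
          then have n1: "Linf_norm M (v \<xi>) \<noteq> 0" and n2: "\<phi> \<xi> \<noteq> 0" using J apos ph by (auto dest: less_imp_neq[symmetric])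
          show "cmod (FT_Lstar M u f \<xi>) powr 2 * Linf_norm M (v \<xi>) powr (2 - 2) * \<phi> \<xi> powr (2 - 2) = (cmod (FT_Lstar M u f \<xi>))\<^sup>2"
            using n1 n2 by (simp add: powr_numeral)
        qed
        also have "\<dots> \<le> B * (\<integral>x. (cmod (f x))\<^sup>2 \<partial>M)" using bes f2 by blast
        also have "(\<integral>x. (cmod (f x))\<^sup>2 \<partial>M) = N" unfolding N_def p2
          by (rule Bochner_Integration.integral_cong) (simp_all add: powr_numeral)
        also have "B * N \<le> D * Mr powr (2-p) * N"
          unfolding p2 D_def using Mr K N0 p by (intro mult_right_mono) auto
        finally show ?thesis .
      qed
    qed
    have summ: "T summable_on I"
      by (rule nonneg_bdd_above_summable_on) (use T0 fs in \<open>auto simp: bdd_above_def\<close>)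
    have inf: "infsum T I \<le> D * Mr powr (2-p) * N"
      by (rule infsum_le_finite_sums[OF summ fs])
    have inf0: "0 \<le> infsum T I" by (rule infsum_nonneg) (use T0 in auto)
    have "infsum T I powr (1/p) \<le> (D * Mr powr (2-p) * N) powr (1/p)"
      using inf inf0 p by (intro powr_mono2) auto
    also have "\<dots> = D powr (1/p) * (Mr powr (2-p)) powr (1/p) * N powr (1/p)"
      by (simp add: powr_mult)
    also have "(Mr powr (2-p)) powr (1/p) = Mr powr ((2-p)/p)"
      by (simp add: powr_powr)
    finally have "infsum T I powr (1/p) \<le> C * Mr powr ((2-p)/p) * Lp_norm M p f"
      unfolding C_def Lp_norm_def N_def .
    then have X: "T summable_on I \<and> infsum T I powr (1/p) \<le> C * enn2real (M_phi M I v \<phi>) powr ((2 - p) / p) * Lp_norm M p f"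
      using summ unfolding Mr_def by simp
    show "((\<lambda>\<xi>. cmod (FT_Lstar M u f \<xi>) powr p * Linf_norm M (v \<xi>) powr (2 - p)
                      * \<phi> \<xi> powr (2 - p)) summable_on I) \<and>
              (\<Sum>\<^sub>\<infinity>\<xi>\<in>I. cmod (FT_Lstar M u f \<xi>) powr p * Linf_norm M (v \<xi>) powr (2 - p)
                      * \<phi> \<xi> powr (2 - p)) powr (1 / p)
                \<le> C * enn2real (M_phi M I v \<phi>) powr ((2 - p) / p) * Lp_norm M p f"
      using X unfolding T_def .
  qed
qed


end
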